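(* Let $x,y>0$ and $r,s\in\mathbb{R}$, and let $F_{r,s;x,y}(w)=E(r+w,s+w;x,y)$ for $w\in\mathbb{R}$. Then $F_{r,s;x,y}$ is logarithmically convex on $\bigl(-\infty,-\frac{s+r}{2}\bigr)$ and logarithmically concave on $\bigl(-\frac{s+r}{2},\infty\bigr)$, i.e. $\frac{d^2}{dw^2}\ln F_{r,s;x,y}(w)\ge0$ for $w<-\frac{r+s}2$ and $\le 0$ for $w>-\frac{r+s}2$.
   Context: For $x,y>0$ and $r,s\in\mathbb{R}$ the extended mean values are defined by $E(r,s;x,y)=\bigl(\frac{r}{s}\cdot\frac{y^s-x^s}{y^r-x^r}\bigr)^{1/(s-r)}$ if $rs(r-s)(x-y)\neq0$; $E(r,0;x,y)=E(0,r;x,y)=\bigl(\frac1r\cdot\frac{y^r-x^r}{\ln y-\ln x}\bigr)^{1/r}$ if $r(x-y)\neq0$; $E(r,r;x,y)=e^{-1/r}\bigl(\frac{x^{x^r}}{y^{y^r}}\bigr)^{1/(x^r-y^r)}$ if $r(x-y)\neq0$; $E(0,0;x,y)=\sqrt{xy}$ if $x\neq y$; $E(r,s;x,x)=x$. *)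

theory Defs
  imports "HOL-Analysis.Analysis"
begin

definition ext_mean :: "real \<Rightarrow> real \<Rightarrow> real \<Rightarrow> real \<Rightarrow> real" where
  "ext_mean r s x y =
    (if x = y then x
     else if r = 0 \<and> s = 0 then sqrt (x * y)
     else if r = s then
       exp (- 1 / r) * ((x powr (x powr r)) / (y powr (y powr r))) powr (1 / (x powr r - y powr r))
     else if s = 0 then ((y powr r - x powr r) / (r * (ln y - ln x))) powr (1 / r)
     else if r = 0 then ((y powr s - x powr s) / (s * (ln y - ln x))) powr (1 / s)
     else ((r / s) * ((y powr s - x powr s) / (y powr r - x powr r))) powr (1 / (s - r)))"

end

theory Submission
  imports Defs "HOL-Real_Asymp.Real_Asymp"
begin


definition LL :: "real \<Rightarrow> real" where "LL u = (if u = 0 then 0 else ln (sinh u / u))"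
definition gg :: "real \<Rightarrow> real" where "gg u = (if u = 0 then 0 else cosh u / sinh u - 1 / u)"
definition hh :: "real \<Rightarrow> real" where "hh u = (if u = 0 then 1/3 else 1 / u^2 - 1 / sinh u ^ 2)"
definition hdr :: "real \<Rightarrow> real" where "hdr u = (if u = 0 then 0 else -2 / u^3 + 2 * cosh u / sinh u ^ 3)"

lemma sinh_div_pos: "u \<noteq> (0::real) \<Longrightarrow> sinh u / u > 0"
  by (cases "u > 0") (auto simp: divide_pos_pos divide_neg_neg)

lemma LL_deriv: "(LL has_real_derivative gg u) (at u)"
proof (cases "u = 0")
  case True
  have lim: "((\<lambda>u::real. ln (sinh u / u) / u) \<longlongrightarrow> 0) (at 0)" by real_asymp
  have "((\<lambda>y. (LL y - LL 0) / (y - 0)) \<longlongrightarrow> 0) (at 0)"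
    by (rule Lim_transform_eventually[OF lim]) (auto simp: eventually_at_filter LL_def)
  then show ?thesis using True by (simp add: has_field_derivative_iff gg_def)
next
  case False
  have "((\<lambda>v. ln (sinh v / v)) has_real_derivative gg u) (at u)"
  proof -
    have "((\<lambda>v. ln (sinh v / v)) has_real_derivative (1 / (sinh u / u)) * ((cosh u * u - sinh u * 1) / (u * u))) (at u)"
      using False sinh_div_pos[OF False]
      by (intro DERIV_chain2[where f=ln] DERIV_ln_divide DERIV_divide) (auto intro!: derivative_eq_intros)
    moreover have "(1 / (sinh u / u)) * ((cosh u * u - sinh u * 1) / (u * u)) = gg u"
      using False by (simp add: gg_def field_simps)
    ultimately show ?thesis by simp
  qed
  then show ?thesis
    by (rule has_field_derivative_transform_within_open[where S="-{0}"]) (use False in \<open>auto simp: LL_def\<close>)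
qed

lemma gg_deriv: "(gg has_real_derivative hh u) (at u)"
proof (cases "u = 0")
  case True
  have lim: "((\<lambda>u::real. (cosh u / sinh u - 1/u) / u) \<longlongrightarrow> 1/3) (at 0)" by real_asymp
  have "((\<lambda>y. (gg y - gg 0) / (y - 0)) \<longlongrightarrow> 1/3) (at 0)"
    by (rule Lim_transform_eventually[OF lim]) (auto simp: eventually_at_filter gg_def)
  then show ?thesis using True by (simp add: has_field_derivative_iff hh_def)
next
  case False
  have "((\<lambda>v. cosh v / sinh v - 1 / v) has_real_derivative hh u) (at u)"
  proof -
    have "((\<lambda>v. cosh v / sinh v - 1 / v) has_real_derivative
       (sinh u * sinh u - cosh u * cosh u) / (sinh u * sinh u) - (- (1 / (u*u)))) (at u)"
      using False by (auto intro!: derivative_eq_intros simp: power2_eq_square)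
    moreover have "(sinh u * sinh u - cosh u * cosh u) / (sinh u * sinh u) - (- (1 / (u*u))) = hh u"
      using False cosh_square_eq[of u] by (simp add: hh_def field_simps power2_eq_square)
    ultimately show ?thesis by simp
  qed
  then show ?thesis
    by (rule has_field_derivative_transform_within_open[where S="-{0}"]) (use False in \<open>auto simp: gg_def\<close>)
qed

lemma hh_deriv: "(hh has_real_derivative hdr u) (at u)"
proof (cases "u = 0")
  case True
  have lim: "((\<lambda>u::real. (1/u^2 - 1/ sinh u ^2 - 1/3) / u) \<longlongrightarrow> 0) (at 0)" by real_asymp
  have "((\<lambda>y. (hh y - hh 0) / (y - 0)) \<longlongrightarrow> 0) (at 0)"
    by (rule Lim_transform_eventually[OF lim]) (auto simp: eventually_at_filter hh_def)
  then show ?thesis using True by (simp add: has_field_derivative_iff hdr_def)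
next
  case False
  have "((\<lambda>v. 1 / v^2 - 1 / sinh v ^ 2) has_real_derivative hdr u) (at u)"
  proof -
    have "((\<lambda>v. 1 / v^2 - 1 / sinh v ^ 2) has_real_derivative
       (- (2 * u) / (u^2 * u^2)) - (- (2 * sinh u * cosh u) / (sinh u ^2 * sinh u ^ 2))) (at u)"
      using False by (auto intro!: derivative_eq_intros simp: power2_eq_square)
    moreover have "(- (2 * u) / (u^2 * u^2)) - (- (2 * sinh u * cosh u) / (sinh u ^2 * sinh u ^ 2)) = hdr u"
      using False by (simp add: hdr_def field_simps power2_eq_square power3_eq_cube)
    ultimately show ?thesis by simp
  qed
  then show ?thesis
    by (rule has_field_derivative_transform_within_open[where S="-{0}"]) (use False in \<open>auto simp: hh_def\<close>)
qed


lemma key_ineq: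
  fixes u :: real assumes "u \<ge> 0"
  shows "u * cosh u powr (1/3) \<le> sinh u"
proof -
  define m where "m = (\<lambda>v::real. sinh v * cosh v powr (-1/3) - v)"
  define m' where "m' = (\<lambda>v::real. cosh v * cosh v powr (-1/3) + sinh v * ((-1/3) * cosh v powr (-1/3 - 1) * sinh v) - 1)"
  have der: "(m has_real_derivative m' v) (at v)" for v
    unfolding m_def m'_def
    by (auto intro!: derivative_eq_intros DERIV_fun_powr)
  have nn: "m' v \<ge> 0" for v
  proof -
    define t where "t = cosh v powr (1/3)"
    have tpos: "t > 0" by (simp add: t_def)
    have t3: "t ^ 3 = cosh v"
      by (simp add: t_def powr_realpow[symmetric] powr_powr)
    have e1: "cosh v powr (-1/3) = 1 / t"
      by (simp add: t_def powr_minus_divide powr_divide)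
    have e2: "cosh v powr (-1/3 - 1) = 1 / t^4"
    proof -
      have "cosh v powr (-1/3 - 1) = cosh v powr (-1/3) / cosh v"
        using powr_diff[of "cosh v" "-1/3" 1] by simp
      then show ?thesis using e1 t3 tpos by (simp add: field_simps power_numeral_reduce)
    qed
    have "t^6 = (t^3)^2" by (simp flip: power_mult)
    then have s2: "sinh v ^ 2 = t^6 - 1" using cosh_square_eq[of v] t3 by simp
    have "m' v = (t^3 / t) - (1/3) * (t^6 - 1) / t^4 - 1"
      unfolding m'_def e1 e2 using t3 s2 by (simp add: power2_eq_square field_simps)
    also have "\<dots> = (t^2 - 1)^2 * (2*t^2 + 1) / (3 * t^4)"
      using tpos by (simp add: field_simps power2_eq_square) (simp add: algebra_simps power_numeral_reduce)
    also have "\<dots> \<ge> 0" using tpos by simp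
    finally show ?thesis .
  qed
  have "m 0 \<le> m u"
    using DERIV_nonneg_imp_nondecreasing[of 0 u m] der nn assms by blast
  then have "sinh u * cosh u powr (-1/3) \<ge> u" by (simp add: m_def)
  then have "u * cosh u powr (1/3) \<le> sinh u * cosh u powr (-1/3) * cosh u powr (1/3)"
    by (simp add: mult_right_mono)
  also have "\<dots> = sinh u * (cosh u powr (-1/3) * cosh u powr (1/3))" by (simp add: mult.assoc)
  also have "cosh u powr (-1/3) * cosh u powr (1/3) = 1"
    by (simp add: powr_add[symmetric])
  finally show ?thesis by simp
qed

lemma key_ineq3:
  fixes u :: real assumes "u \<ge> 0"
  shows "u^3 * cosh u \<le> sinh u ^ 3"
proof -
  have "(u * cosh u powr (1/3))^3 \<le> sinh u ^ 3"
    using key_ineq[OF assms] assms by (intro power_mono) auto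
  moreover have "(cosh u powr (1/3))^3 = cosh u"
    by (simp add: powr_realpow[symmetric] powr_powr)
  ultimately show ?thesis by (simp add: power_mult_distrib)
qed

lemma hdr_nonpos: "u \<ge> 0 \<Longrightarrow> hdr u \<le> 0"
proof -
  assume u: "u \<ge> 0"
  show ?thesis
  proof (cases "u = 0")
    case False
    then have up: "u > 0" using u by simp
    have sp: "sinh u > 0" using up by simp
    have "cosh u / sinh u ^ 3 \<le> 1 / u^3"
      using key_ineq3[OF u] up sp by (simp add: divide_simps mult.commute)
    then show ?thesis using False by (simp add: hdr_def)
  qed (simp add: hdr_def)
qed

lemma hdr_odd: "hdr (-u) = - hdr u"
  by (simp add: hdr_def)

lemma hh_even: "hh (-u) = hh u"
  by (simp add: hh_def)

lemma u_hdr: "u * hdr u \<le> 0"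
proof (cases "u \<ge> 0")
  case True then show ?thesis using hdr_nonpos[OF True] by (simp add: mult_nonneg_nonpos)
next
  case False
  then have "hdr (-u) \<le> 0" by (intro hdr_nonpos) simp
  then have "hdr u \<ge> 0" by (simp add: hdr_odd)
  then show ?thesis using False by (simp add: mult_nonpos_nonneg)
qed

lemma hh_mono0: "0 \<le> p \<Longrightarrow> p \<le> q \<Longrightarrow> hh q \<le> hh p"
  by (rule deriv_nonpos_imp_antimono[of p q hh hdr]) (auto intro: hh_deriv hdr_nonpos)

lemma hh_mono_sq: "p^2 \<le> q^2 \<Longrightarrow> hh q \<le> hh p"
proof -
  assume "p^2 \<le> q^2"
  then have "\<bar>p\<bar> \<le> \<bar>q\<bar>" using abs_le_square_iff by blast
  then have "hh \<bar>q\<bar> \<le> hh \<bar>p\<bar>" by (intro hh_mono0) auto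
  moreover have "hh \<bar>x\<bar> = hh x" for x by (cases "x \<ge> 0") (auto simp: hh_even)
  ultimately show ?thesis by simp
qed



lemma sinh_exp2: "2 * exp (A::real) * sinh B = exp (A + B) - exp (A - B)"
proof -
  have "2 * exp (A::real) * sinh B = exp A * exp B - exp A * exp (-B)" by (simp add: sinh_def algebra_simps)
  also have "\<dots> = exp (A + B) - exp (A + (-B))" by (simp only: exp_add)
  finally show ?thesis by simp
qed

lemma Ylem:
  fixes x y t :: real
  assumes "x > 0" "y > 0"
  shows "y powr t - x powr t = 2 * exp ((ln x + ln y)/2 * t) * sinh ((ln y - ln x)/2 * t)"
proof -
  have "2 * exp ((ln x + ln y)/2 * t) * sinh ((ln y - ln x)/2 * t)
      = exp ((ln x + ln y)/2 * t + (ln y - ln x)/2 * t) - exp ((ln x + ln y)/2 * t - (ln y - ln x)/2 * t)"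
    by (rule sinh_exp2)
  also have "\<dots> = exp (t * ln y) - exp (t * ln x)" by (simp add: algebra_simps add_divide_distrib[symmetric] diff_divide_distrib[symmetric])
  also have "\<dots> = y powr t - x powr t" using assms by (simp add: powr_def)
  finally show ?thesis by simp
qed

lemma Qlem:
  fixes x y t :: real
  assumes "x > 0" "y > 0" "x \<noteq> y" "t \<noteq> 0"
  defines "\<mu> \<equiv> (ln x + ln y)/2" and "c \<equiv> (ln y - ln x)/2"
  shows "(y powr t - x powr t) / t = 2 * c * exp (\<mu> * t + LL (c * t))"
proof -
  have c0: "c \<noteq> 0" using assms by (auto simp: c_def)
  have ct: "c * t \<noteq> 0" using c0 assms by simp
  have "exp (LL (c*t)) = sinh (c*t) / (c*t)"
    using sinh_div_pos[OF ct] ct by (simp add: LL_def)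
  then have "2 * c * exp (\<mu> * t + LL (c * t)) = 2 * exp (\<mu> * t) * sinh (c*t) / t"
    using c0 by (simp add: exp_add field_simps)
  also have "\<dots> = (y powr t - x powr t) / t" using Ylem[OF assms(1,2), of t] by (simp add: \<mu>_def c_def)
  finally show ?thesis by simp
qed

lemma rep:
  fixes x y p q :: real
  assumes xy: "x > 0" "y > 0" "x \<noteq> y"
  defines "\<mu> \<equiv> (ln x + ln y)/2" and "c \<equiv> (ln y - ln x)/2"
  shows "ln (ext_mean p q x y) = \<mu> + (if p = q then c * gg (c * p) else (LL (c*q) - LL (c*p)) / (q - p))"
proof -
  have c0: "c \<noteq> 0" using xy by (auto simp: c_def)
  have lnd: "ln y - ln x = 2 * c" by (simp add: c_def)
  have Q: "(y powr t - x powr t) / t = 2 * c * exp (\<mu> * t + LL (c * t))" if "t \<noteq> 0" for t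
    using Qlem[OF xy that] by (simp add: \<mu>_def c_def)
  consider "p = 0 \<and> q = 0" | "p = q \<and> p \<noteq> 0" | "p \<noteq> q \<and> q = 0" | "p \<noteq> q \<and> p = 0" | "p \<noteq> q \<and> p \<noteq> 0 \<and> q \<noteq> 0"
    by blast
  then show ?thesis
  proof cases
    case 1
    then show ?thesis using xy by (simp add: ext_mean_def ln_sqrt ln_mult \<mu>_def gg_def)
  next
    case 2
    then have p0: "p \<noteq> 0" and pq: "q = p" by auto
    define E where "E = exp (\<mu> * p)"
    define K where "K = exp (c * p)"
    have Kp: "K > 0" "E > 0" by (auto simp: K_def E_def)
    have K1: "K \<noteq> 1" using c0 p0 by (simp add: K_def)
    have K2: "K * K \<noteq> 1"
    proof
      assume "K * K = 1"
      then have "(K - 1) * (K + 1) = 0" by algebra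
      with Kp K1 show False by simp
    qed
    have X: "x powr p = E / K" using xy
      by (simp add: powr_def E_def K_def \<mu>_def c_def exp_diff[symmetric] algebra_simps add_divide_distrib[symmetric] diff_divide_distrib[symmetric])
    have Y: "y powr p = E * K" using xy
      by (simp add: powr_def E_def K_def \<mu>_def c_def exp_add[symmetric] algebra_simps add_divide_distrib[symmetric] diff_divide_distrib[symmetric])
    have pos: "x powr (x powr p) / y powr (y powr p) > 0" using xy by simp
    have "ln (ext_mean p q x y) = -1/p + (1 / (x powr p - y powr p)) * ln (x powr (x powr p) / y powr (y powr p))"
      using xy p0 pos by (simp add: ext_mean_def pq ln_mult)
    also have "\<dots> = -1/p + (x powr p * ln x - y powr p * ln y) / (x powr p - y powr p)"
      using xy by (simp add: ln_div)
    also have "\<dots> = -1/p + (E / K * (\<mu> - c) - E * K * (\<mu> + c)) / (E / K - E * K)"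
    proof -
      have mc: "ln x = \<mu> - c" "ln y = \<mu> + c" by (simp_all add: \<mu>_def c_def field_simps)
      show ?thesis unfolding X Y mc ..
    qed
    also have "\<dots> = \<mu> + c * gg (c * p)"
    proof -
      have sh: "sinh (c*p) = (K - 1/K)/2" "cosh (c*p) = (K + 1/K)/2"
        by (simp_all add: sinh_def cosh_def K_def exp_minus inverse_eq_divide)
      have KK: "K*K - 1 \<noteq> 0" using K2 by simp
      have den: "E/K - E*K = E * (1 - K*K) / K" using Kp by (simp add: field_simps)
      have A: "(E / K * (\<mu> - c) - E * K * (\<mu> + c)) / (E / K - E * K) = ((\<mu>+c)*K*K - (\<mu>-c)) / (K*K-1)"
        unfolding den using Kp KK by (simp add: divide_simps) (simp add: algebra_simps)
      have B: "cosh (c*p) / sinh (c*p) = (K*K+1)/(K*K-1)"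
        unfolding sh using Kp KK by (simp add: divide_simps)
      have C: "gg (c*p) = (K*K+1)/(K*K-1) - 1/(c*p)"
        using c0 p0 B by (simp add: gg_def)
      show ?thesis unfolding A C using c0 p0 KK by (simp add: divide_simps) (simp add: algebra_simps)
    qed
    finally show ?thesis using pq by simp
  next
    case 3
    then have p0: "p \<noteq> 0" and q0: "q = 0" by auto
    have "(y powr p - x powr p) / (p * (ln y - ln x)) = exp (\<mu> * p + LL (c * p))"
      using Q[OF p0] c0 p0 unfolding lnd by (simp add: field_simps)
    then have "ln (ext_mean p q x y) = (1/p) * (\<mu> * p + LL (c * p))"
      using xy p0 q0 by (simp add: ext_mean_def)
    then show ?thesis using p0 q0 by (simp add: LL_def field_simps)
  next
    case 4
    then have q0: "q \<noteq> 0" and p0: "p = 0" by auto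
    have "(y powr q - x powr q) / (q * (ln y - ln x)) = exp (\<mu> * q + LL (c * q))"
      using Q[OF q0] c0 q0 unfolding lnd by (simp add: field_simps)
    then have "ln (ext_mean p q x y) = (1/q) * (\<mu> * q + LL (c * q))"
      using xy p0 q0 by (simp add: ext_mean_def)
    then show ?thesis using p0 q0 by (simp add: LL_def field_simps)
  next
    case 5
    then have p0: "p \<noteq> 0" and q0: "q \<noteq> 0" and pq: "p \<noteq> q" by auto
    have "(p / q) * ((y powr q - x powr q) / (y powr p - x powr p))
        = ((y powr q - x powr q) / q) / ((y powr p - x powr p) / p)"
      using p0 q0 by (simp add: field_simps)
    also have "\<dots> = exp (\<mu> * (q - p) + LL (c*q) - LL (c*p))"
      using Q[OF p0] Q[OF q0] c0 by (simp add: exp_add exp_diff algebra_simps)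
    finally have "ln (ext_mean p q x y) = (1/(q-p)) * (\<mu> * (q - p) + LL (c*q) - LL (c*p))"
      using xy p0 q0 pq by (simp add: ext_mean_def)
    then show ?thesis using pq by (simp add: field_simps)
  qed
qed



lemma convex_2nd:
  fixes f f1 f2 :: "real \<Rightarrow> real"
  assumes A: "connected A"
    and d1: "\<And>w. w \<in> A \<Longrightarrow> (f has_real_derivative f1 w) (at w)"
    and d2: "\<And>w. w \<in> A \<Longrightarrow> (f1 has_real_derivative f2 w) (at w)"
    and nn: "\<And>w. w \<in> A \<Longrightarrow> f2 w \<ge> 0"
  shows "convex_on A f"
proof (rule convex_on_realI[OF A d1])
  fix a b assume ab: "a \<in> A" "b \<in> A" "a \<le> b"
  then have sub: "{a..b} \<subseteq> A" using connected_contains_Icc A by blast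
  show "f1 a \<le> f1 b"
  proof (rule DERIV_nonneg_imp_nondecreasing[OF ab(3)])
    fix x assume "a \<le> x" "x \<le> b"
    then have "x \<in> A" using sub by auto
    then show "\<exists>y. DERIV f1 x :> y \<and> y \<ge> 0" using d2 nn by blast
  qed
qed

lemma chain_lin:
  assumes "\<And>u. (F has_real_derivative F' u) (at u)"
  shows "((\<lambda>w. F (c * (r + w))) has_real_derivative F' (c * (r + w)) * c) (at w)"
  by (rule DERIV_chain2[OF assms]) (auto intro!: derivative_eq_intros)

lemma ratio_sign1:
  fixes \<alpha> \<beta> c :: real
  assumes "\<alpha> \<noteq> \<beta>" "\<alpha> + \<beta> \<le> 0"
  shows "(hh (c*\<alpha>) * c * c - hh (c*\<beta>) * c * c) / (\<alpha> - \<beta>) \<ge> 0"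
proof (cases "\<alpha> > \<beta>")
  case True
  have "\<alpha>^2 - \<beta>^2 = (\<alpha> - \<beta>) * (\<alpha> + \<beta>)" by (simp add: algebra_simps power2_eq_square)
  also have "\<dots> \<le> 0" using True assms by (simp add: mult_nonneg_nonpos)
  finally have "(c*\<alpha>)^2 \<le> (c*\<beta>)^2" by (simp add: power_mult_distrib mult_left_mono)
  then have "hh (c*\<beta>) \<le> hh (c*\<alpha>)" by (rule hh_mono_sq)
  then have "hh (c*\<beta>) * (c * c) \<le> hh (c*\<alpha>) * (c * c)" by (simp add: mult_right_mono)
  then show ?thesis using True by (simp add: mult.assoc)
next
  case False
  then have F: "\<alpha> < \<beta>" using assms by simp
  have "\<alpha>^2 - \<beta>^2 = (\<alpha> - \<beta>) * (\<alpha> + \<beta>)" by (simp add: algebra_simps power2_eq_square)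
  also have "\<dots> \<ge> 0" using F assms by (simp add: mult_nonpos_nonpos)
  finally have "(c*\<beta>)^2 \<le> (c*\<alpha>)^2" by (simp add: power_mult_distrib mult_left_mono)
  then have "hh (c*\<alpha>) \<le> hh (c*\<beta>)" by (rule hh_mono_sq)
  then have "hh (c*\<alpha>) * (c * c) \<le> hh (c*\<beta>) * (c * c)" by (simp add: mult_right_mono)
  then show ?thesis using F by (simp add: mult.assoc divide_nonpos_neg)
qed

lemma ratio_sign2:
  fixes \<alpha> \<beta> c :: real
  assumes "\<alpha> \<noteq> \<beta>" "\<alpha> + \<beta> \<ge> 0"
  shows "(hh (c*\<alpha>) * c * c - hh (c*\<beta>) * c * c) / (\<alpha> - \<beta>) \<le> 0"
proof -
  have "(hh (c*(-\<alpha>)) * c * c - hh (c*(-\<beta>)) * c * c) / ((-\<alpha>) - (-\<beta>)) \<ge> 0"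
    using assms by (intro ratio_sign1) auto
  moreover have "hh (c*(-\<alpha>)) = hh (c*\<alpha>)" "hh (c*(-\<beta>)) = hh (c*\<beta>)"
    using hh_even[of "c*\<alpha>"] hh_even[of "c*\<beta>"] by simp_all
  moreover have "Z / (\<beta> - \<alpha>) = - (Z / (\<alpha> - \<beta>))" for Z :: real
    by (metis minus_diff_eq divide_minus_right)
  ultimately show ?thesis by simp
qed



theorem theorem3:
  fixes x y r s :: real
  assumes "x > 0" and "y > 0"
  shows "convex_on {..< - (r + s) / 2} (\<lambda>w. ln (ext_mean (r + w) (s + w) x y))
       \<and> concave_on {- (r + s) / 2 <..} (\<lambda>w. ln (ext_mean (r + w) (s + w) x y))"
proof (cases "x = y")
  case True
  then show ?thesis by (simp add: ext_mean_def concave_on_def convex_on_const)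
next
  case False
  define \<mu> where "\<mu> = (ln x + ln y)/2"
  define c where "c = (ln y - ln x)/2"
  have R: "ln (ext_mean p q x y) = \<mu> + (if p = q then c * gg (c * p) else (LL (c*q) - LL (c*p)) / (q - p))" for p q
    using rep[OF assms False, of p q] by (simp add: \<mu>_def c_def)
  show ?thesis
  proof (cases "r = s")
    case True
    have fe: "(\<lambda>w. ln (ext_mean (r + w) (s + w) x y)) = (\<lambda>w. \<mu> + c * gg (c * (r + w)))"
      using True by (simp add: R)
    have m: "- (r + s) / 2 = - r" using True by simp
    define f1 where "f1 = (\<lambda>w. c * (hh (c * (r + w)) * c))"
    define f2 where "f2 = (\<lambda>w. c * (hdr (c * (r + w)) * c * c))"
    have D1: "((\<lambda>w. \<mu> + c * gg (c * (r + w))) has_real_derivative f1 w) (at w)" for w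
      unfolding f1_def
      using DERIV_add[OF DERIV_const[of \<mu>] DERIV_cmult[OF chain_lin[OF gg_deriv, of c r w], of c]] by simp
    have D2: "(f1 has_real_derivative f2 w) (at w)" for w
      unfolding f1_def f2_def
      using DERIV_cmult[OF DERIV_cmult_right[OF chain_lin[OF hh_deriv, of c r w], of c], of c] by (simp add: mult.assoc)
    have key: "(r + w) * (c * hdr (c * (r + w))) \<le> 0" for w
      using u_hdr[of "c * (r + w)"] by (simp add: mult.assoc mult.left_commute)
    have f2eq: "f2 w = (c * c) * (c * hdr (c * (r + w)))" for w
      by (simp add: f2_def mult_ac)
    have cv: "convex_on {..< - r} (\<lambda>w. \<mu> + c * gg (c * (r + w)))"
    proof (rule convex_2nd[OF _ D1 D2])
      fix w assume "w \<in> {..< - r}"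
      then have "r + w < 0" by simp
      then have "c * hdr (c * (r + w)) \<ge> 0" using key[of w] by (simp add: mult_le_0_iff)
      then show "f2 w \<ge> 0" unfolding f2eq by simp
    qed simp
    have cc: "convex_on {- r <..} (\<lambda>w. - (\<mu> + c * gg (c * (r + w))))"
    proof (rule convex_2nd[of _ _ "\<lambda>w. - f1 w" "\<lambda>w. - f2 w"])
      fix w assume "w \<in> {- r <..}"
      then have "r + w > 0" by simp
      then have "c * hdr (c * (r + w)) \<le> 0" using key[of w] by (simp add: mult_le_0_iff)
      then show "- f2 w \<ge> 0" unfolding f2eq by (simp add: mult_nonneg_nonpos)
    qed (rule DERIV_minus D1 D2 | simp)+
    show ?thesis unfolding fe m concave_on_def using cv cc by simp
  next
    case False
    have fe: "(\<lambda>w. ln (ext_mean (r + w) (s + w) x y)) = (\<lambda>w. \<mu> + (LL (c * (s + w)) - LL (c * (r + w))) / (s - r))"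
      using False by (simp add: R)
    define f1 where "f1 = (\<lambda>w. (gg (c * (s + w)) * c - gg (c * (r + w)) * c) / (s - r))"
    define f2 where "f2 = (\<lambda>w. (hh (c * (s + w)) * c * c - hh (c * (r + w)) * c * c) / (s - r))"
    have D1: "((\<lambda>w. \<mu> + (LL (c * (s + w)) - LL (c * (r + w))) / (s - r)) has_real_derivative f1 w) (at w)" for w
      unfolding f1_def
      using DERIV_add[OF DERIV_const[of \<mu>] DERIV_cdivide[OF DERIV_diff[OF chain_lin[OF LL_deriv, of c s w] chain_lin[OF LL_deriv, of c r w]], of "s - r"]]
      by simp
    have D2: "(f1 has_real_derivative f2 w) (at w)" for w
      unfolding f1_def f2_def
      using DERIV_cdivide[OF DERIV_diff[OF DERIV_cmult_right[OF chain_lin[OF gg_deriv, of c s w], of c] DERIV_cmult_right[OF chain_lin[OF gg_deriv, of c r w], of c]], of "s - r"]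
      by simp
    have f2eq: "f2 w = (hh (c * (s + w)) * c * c - hh (c * (r + w)) * c * c) / ((s + w) - (r + w))" for w
      by (simp add: f2_def)
    have sw: "s + w \<noteq> r + w" for w using False by simp
    have cv: "convex_on {..< - (r + s) / 2} (\<lambda>w. \<mu> + (LL (c * (s + w)) - LL (c * (r + w))) / (s - r))"
    proof (rule convex_2nd[OF _ D1 D2])
      fix w assume "w \<in> {..< - (r + s) / 2}"
      then have "(s + w) + (r + w) \<le> 0" by simp
      then show "f2 w \<ge> 0" unfolding f2eq by (intro ratio_sign1 sw)
    qed simp
    have cc: "convex_on {- (r + s) / 2 <..} (\<lambda>w. - (\<mu> + (LL (c * (s + w)) - LL (c * (r + w))) / (s - r)))"
    proof (rule convex_2nd[of _ _ "\<lambda>w. - f1 w" "\<lambda>w. - f2 w"])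
      fix w assume "w \<in> {- (r + s) / 2 <..}"
      then have "(s + w) + (r + w) \<ge> 0" by simp
      then have "f2 w \<le> 0" unfolding f2eq by (intro ratio_sign2 sw)
      then show "- f2 w \<ge> 0" by simp
    qed (rule DERIV_minus D1 D2 | simp)+
    show ?thesis unfolding fe concave_on_def using cv cc by simp
  qed
qed


end
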